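(* Let $\mathcal D=(D,<,\rho)$ be a computable partially ordered set. There exists $U\in\mathrm{Max}_{\mathrm{PR}}[\{0,1\}^*\to\mathcal D]$ such that for every $F\in\mathrm{Max}_{\mathrm{PR}}[\{0,1\}^*\to\mathcal D]$ there is a constant $c$ with $K_U(d)\le K_F(d)+c$ for every $d$ in the range of $F$.
   Context: A computable partially ordered set is a triple $\mathcal D=(D,<,\rho)$ where $\rho:\mathbb N\to D$ is a bijection and $<$ is a strict partial order on $D$ with $\{(m,n):\rho(m)<\rho(n)\}$ computable; a partial function into $D$ is partial computable if its composition with $\rho^{-1}$ is. For a partial $f:\{0,1\}^*\times\mathbb N\to D$ monotone increasing in its second argument on its domain, $\max^{\mathcal D}f$ is the partial function defined exactly at those $p$ for which $\{f(p,t):t\in\mathbb N,\ f(p,t)\text{ defined}\}$ is finite and non-empty, with value its maximum element. $\mathrm{Max}_{\mathrm{PR}}[\{0,1\}^*\to\mathcal D]$ is the class of all $\max^{\mathcal D}f$ with $f$ partial computable and monotone increasing in its second argument. For a partial $\varphi:\{0,1\}^*\to D$, $K_\varphi:D\to\mathbb N$ is the partial function $K_\varphi(d)=\min\{|p|:\varphi(p)=d\}$, defined on the range of $\varphi$. *)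

theory Defs
  imports Main
begin

datatype recf = Zero | Succ | Proj nat | Comp recf "recf list" | Prim recf recf | Mini recf

inductive eval :: "recf \<Rightarrow> nat list \<Rightarrow> nat \<Rightarrow> bool" where
  eval_Zero: "eval Zero xs 0"
| eval_Succ: "eval Succ (x # xs) (Suc x)"
| eval_Proj: "i < length xs \<Longrightarrow> eval (Proj i) xs (xs ! i)"
| eval_Comp: "list_all2 (\<lambda>g y. eval g xs y) gs ys \<Longrightarrow> eval f ys z \<Longrightarrow> eval (Comp f gs) xs z"
| eval_Prim0: "eval f xs y \<Longrightarrow> eval (Prim f g) (0 # xs) y"
| eval_PrimS: "eval (Prim f g) (n # xs) y \<Longrightarrow> eval g (n # y # xs) z \<Longrightarrow> eval (Prim f g) (Suc n # xs) z"
| eval_Mini: "eval f (y # xs) 0 \<Longrightarrow> (\<forall>z<y. \<exists>w>0. eval f (z # xs) w) \<Longrightarrow> eval (Mini f) xs y"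

text \<open>Standard computable bijection between {0,1}* (bool lists) and nat.\<close>
fun bl_code :: "bool list \<Rightarrow> nat" where
  "bl_code [] = 0"
| "bl_code (b # bs) = 2 * bl_code bs + (if b then 2 else 1)"

definition computable_poset :: "('d \<Rightarrow> 'd \<Rightarrow> bool) \<Rightarrow> (nat \<Rightarrow> 'd) \<Rightarrow> bool" where
  "computable_poset lt \<rho> \<longleftrightarrow>
     bij \<rho> \<and>
     (\<forall>x. \<not> lt x x) \<and> (\<forall>x y z. lt x y \<longrightarrow> lt y z \<longrightarrow> lt x z) \<and>
     (\<exists>r. \<forall>m n. eval r [m, n] (if lt (\<rho> m) (\<rho> n) then 1 else 0))"

text \<open>A partial function {0,1}* x N -> D is partial computable iff its composition
with rho^-1 is partial recursive.\<close>
definition pc2 :: "(nat \<Rightarrow> 'd) \<Rightarrow> (bool list \<Rightarrow> nat \<Rightarrow> 'd option) \<Rightarrow> bool" where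
  "pc2 \<rho> f \<longleftrightarrow> (\<exists>r. \<forall>p t y. eval r [bl_code p, t] y \<longleftrightarrow> f p t = Some (\<rho> y))"

definition mono_second :: "('d \<Rightarrow> 'd \<Rightarrow> bool) \<Rightarrow> (bool list \<Rightarrow> nat \<Rightarrow> 'd option) \<Rightarrow> bool" where
  "mono_second lt f \<longleftrightarrow>
     (\<forall>p t t' d d'. t \<le> t' \<longrightarrow> f p t = Some d \<longrightarrow> f p t' = Some d' \<longrightarrow> (d = d' \<or> lt d d'))"

definition maxD :: "('d \<Rightarrow> 'd \<Rightarrow> bool) \<Rightarrow> (bool list \<Rightarrow> nat \<Rightarrow> 'd option) \<Rightarrow> bool list \<Rightarrow> 'd option" where
  "maxD lt f p =
     (let S = {d. \<exists>t. f p t = Some d} in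
      if finite S \<and> S \<noteq> {} then Some (THE d. d \<in> S \<and> (\<forall>e\<in>S. e = d \<or> lt e d)) else None)"

definition MaxPR :: "('d \<Rightarrow> 'd \<Rightarrow> bool) \<Rightarrow> (nat \<Rightarrow> 'd) \<Rightarrow> (bool list \<Rightarrow> 'd option) set" where
  "MaxPR lt \<rho> = {maxD lt f | f. pc2 \<rho> f \<and> mono_second lt f}"

definition Kc :: "(bool list \<Rightarrow> 'd option) \<Rightarrow> 'd \<Rightarrow> nat option" where
  "Kc \<phi> d = (if \<exists>p. \<phi> p = Some d then Some (LEAST n. \<exists>p. \<phi> p = Some d \<and> length p = n) else None)"

end

theory Submission
  imports Defs "HOL-Library.Nat_Bijection"
begin

lemma eval_Comp1: "eval g xs y \<Longrightarrow> eval f [y] z \<Longrightarrow> eval (Comp f [g]) xs z"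
  by (rule eval_Comp[where ys="[y]"]) auto

lemma eval_Comp2: "eval g xs y \<Longrightarrow> eval h xs y' \<Longrightarrow> eval f [y, y'] z \<Longrightarrow> eval (Comp f [g, h]) xs z"
  by (rule eval_Comp[where ys="[y, y']"]) auto

lemma eval_Comp3: "eval g xs y \<Longrightarrow> eval h xs y' \<Longrightarrow> eval k xs y'' \<Longrightarrow> eval f [y, y', y''] z
   \<Longrightarrow> eval (Comp f [g, h, k]) xs z"
  by (rule eval_Comp[where ys="[y, y', y'']"]) auto

lemma eval_P0: "eval (Proj 0) (x # xs) x"
  using eval_Proj[of 0 "x#xs"] by simp
lemma eval_P1: "eval (Proj 1) (x # y # xs) y"
  using eval_Proj[of 1 "x#y#xs"] by simp
lemma eval_P1': "eval (Proj (Suc 0)) (x # y # xs) y"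
  using eval_Proj[of 1 "x#y#xs"] by simp
lemma eval_P2: "eval (Proj 2) (x # y # z # xs) z"
  using eval_Proj[of 2 "x#y#z#xs"] by simp

lemma eval_Prim_rec:
  assumes "eval f xs b" and "\<And>i acc. eval g (i # acc # xs) (s i acc)"
  shows "eval (Prim f g) (n # xs) (rec_nat b s n)"
proof (induction n)
  case 0 then show ?case using assms(1) by (simp add: eval_Prim0)
next
  case (Suc n) then show ?case using assms(2) by (simp add: eval_PrimS)
qed

lemma eval_Mini_tot:
  assumes "\<And>y. eval h (y # xs) (H y)" and "H y0 = 0" and "\<forall>y<y0. H y > 0"
  shows "eval (Mini h) xs y0"
  using assms(1)[of y0] assms(2,3) assms(1) by (auto intro!: eval_Mini)

inductive_cases evZ: "eval Zero xs y"
inductive_cases evS: "eval Succ xs y"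
inductive_cases evP: "eval (Proj i) xs y"
inductive_cases evC: "eval (Comp f gs) xs y"
inductive_cases evPr: "eval (Prim f g) xs y"
inductive_cases evM: "eval (Mini f) xs y"

lemma list_all2_det:
  assumes "list_all2 (\<lambda>g y. eval g xs y \<and> (\<forall>y'. eval g xs y' \<longrightarrow> y = y')) gs ys"
    and "list_all2 (\<lambda>g y. eval g xs y) gs ys'"
  shows "ys = ys'"
  using assms
proof (induction arbitrary: ys' rule: list_all2_induct)
  case Nil then show ?case by simp
next
  case (Cons x xs y ys) then show ?case
    by (cases ys') auto
qed

lemma eval_det: "eval r xs y \<Longrightarrow> eval r xs y' \<Longrightarrow> y = y'"
proof (induction arbitrary: y' rule: eval.induct)
  case (eval_Zero xs) then show ?case by (rule evZ) simp
next
  case (eval_Succ x xs) then show ?case by (rule evS) simp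
next
  case (eval_Proj i xs) from eval_Proj.prems show ?case by (rule evP) simp
next
  case (eval_Comp xs gs ys f z)
  from eval_Comp.prems obtain ys' where a: "list_all2 (\<lambda>g y. eval g xs y) gs ys'" and b: "eval f ys' y'"
    by (rule evC) simp
  have "ys = ys'" by (rule list_all2_det[OF eval_Comp.IH(1) a])
  then show ?case using eval_Comp.IH(2) b by simp
next
  case (eval_Prim0 f xs y g)
  from eval_Prim0.prems show ?case
  proof (rule evPr)
    fix xs' assume "0 # xs = 0 # xs'" "eval f xs' y'"
    then show ?thesis using eval_Prim0.IH by simp
  next
    fix n xs' y2 assume "0 # xs = Suc n # xs'"
    then show ?thesis by simp
  qed
next
  case (eval_PrimS f g n xs y z)
  from eval_PrimS.prems show ?case
  proof (rule evPr)
    fix xs' assume "Suc n # xs = 0 # xs'"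
    then show ?thesis by simp
  next
    fix n' xs' y2 assume h: "Suc n # xs = Suc n' # xs'" "eval (Prim f g) (n' # xs') y2" "eval g (n' # y2 # xs') y'"
    then have "y2 = y" using eval_PrimS.IH(1) by simp
    then show ?thesis using h eval_PrimS.IH(2) by simp
  qed
next
  case (eval_Mini f y xs)
  from eval_Mini.prems obtain y2 where e: "eval f (y2 # xs) 0" "\<forall>z<y2. \<exists>w>0. eval f (z # xs) w" "y' = y2"
    by (rule evM) simp
  show ?case
  proof (rule ccontr)
    assume ne: "y \<noteq> y'"
    show False
    proof (cases "y < y2")
      case True
      then obtain w where w: "w > 0" "eval f (y # xs) w" using e by auto
      have "0 = w" using eval_Mini.IH(1)[OF w(2)] .
      then show False using w(1) by simp
    next
      case False
      then have "y2 < y" using ne e by simp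
      then obtain w where "w > 0" "eval f (y2 # xs) w" "\<forall>w'. eval f (y2 # xs) w' \<longrightarrow> w = w'"
        using eval_Mini.IH(2) by blast
      then have "w = 0" using e(1) by blast
      then show False using \<open>w > 0\<close> by simp
    qed
  qed
qed

lemma eval_Succ': "y = Suc x \<Longrightarrow> eval Succ (x # xs) y" using eval_Succ by simp
lemma eval_Zero': "y = 0 \<Longrightarrow> eval Zero xs y" using eval_Zero by simp
lemmas evi = eval_Comp1 eval_Comp2 eval_Comp3 eval_P0 eval_P1 eval_P1' eval_P2 eval_Succ' eval_Zero'

section \<open>Raw arithmetic\<close>

definition "r_pred = Prim Zero (Proj 0)"
lemma eval_pred: "y = x - 1 \<Longrightarrow> eval r_pred [x] y"
proof -
  have "eval r_pred [x] (rec_nat 0 (\<lambda>i acc. i) x)"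
    unfolding r_pred_def by (rule eval_Prim_rec) (rule evi | simp)+
  moreover have "rec_nat 0 (\<lambda>i acc. i) x = x - 1" by (cases x) auto
  ultimately show "y = x - 1 \<Longrightarrow> ?thesis" by simp
qed

definition "r_subR = Prim (Proj 0) (Comp r_pred [Proj 1])"
definition "r_sub = Comp r_subR [Proj 1, Proj 0]"
lemma eval_subR: "eval r_subR [y, x] (x - y)"
proof -
  have "eval r_subR [y, x] (rec_nat x (\<lambda>i acc. acc - 1) y)"
    unfolding r_subR_def by (rule eval_Prim_rec) (rule evi eval_pred | simp)+
  moreover have "rec_nat x (\<lambda>i acc. acc - 1) y = x - y" by (induction y) auto
  ultimately show ?thesis by simp
qed
lemma eval_sub: "z = x - y \<Longrightarrow> eval r_sub [x, y] z"
  unfolding r_sub_def by (rule evi eval_subR | simp)+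

definition "r_addR = Prim (Proj 0) (Comp Succ [Proj 1])"
definition "r_add = Comp r_addR [Proj 1, Proj 0]"
lemma eval_addR: "eval r_addR [y, x] (x + y)"
proof -
  have "eval r_addR [y, x] (rec_nat x (\<lambda>i acc. Suc acc) y)"
    unfolding r_addR_def by (rule eval_Prim_rec) (rule evi | simp)+
  moreover have "rec_nat x (\<lambda>i acc. Suc acc) y = x + y" by (induction y) auto
  ultimately show ?thesis by simp
qed
lemma eval_add: "z = x + y \<Longrightarrow> eval r_add [x, y] z"
  unfolding r_add_def by (rule evi eval_addR | simp)+

definition "r_tri = Prim Zero (Comp r_add [Proj 1, Comp Succ [Proj 0]])"
lemma eval_tri0: "eval r_tri [n] (rec_nat 0 (\<lambda>i acc. acc + Suc i) n)"
  unfolding r_tri_def by (rule eval_Prim_rec) (rule evi eval_add | simp)+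
lemma eval_tri: "y = triangle n \<Longrightarrow> eval r_tri [n] y"
proof -
  have "rec_nat 0 (\<lambda>i acc. acc + Suc i) n = triangle n" by (induction n) auto
  then show "y = triangle n \<Longrightarrow> eval r_tri [n] y" using eval_tri0[of n] by simp
qed

definition pr :: "nat \<Rightarrow> nat \<Rightarrow> nat" where "pr a b = prod_encode (a, b)"
definition p1 :: "nat \<Rightarrow> nat" where "p1 z = fst (prod_decode z)"
definition p2 :: "nat \<Rightarrow> nat" where "p2 z = snd (prod_decode z)"

lemma p1_pr[simp]: "p1 (pr a b) = a" by (simp add: p1_def pr_def)
lemma p2_pr[simp]: "p2 (pr a b) = b" by (simp add: p2_def pr_def)
lemma pr_p12[simp]: "pr (p1 z) (p2 z) = z" by (simp add: p1_def p2_def pr_def)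
lemma pr_eq[simp]: "pr a b = pr c d \<longleftrightarrow> a = c \<and> b = d" by (simp add: pr_def)
lemma p1_le: "p1 z \<le> z" by (metis le_prod_encode_1 pr_def pr_p12)
lemma p2_le: "p2 z \<le> z" by (metis le_prod_encode_2 pr_def pr_p12)
lemma pr_ge1: "a \<le> pr a b" by (simp add: pr_def le_prod_encode_1)
lemma pr_ge2: "b \<le> pr a b" by (simp add: pr_def le_prod_encode_2)

definition "r_pr = Comp r_add [Comp r_tri [Comp r_add [Proj 0, Proj 1]], Proj 0]"
lemma eval_pr: "y = pr a b \<Longrightarrow> eval r_pr [a, b] y"
  unfolding r_pr_def pr_def prod_encode_def
  by (rule evi eval_add eval_tri | simp del: triangle_Suc)+

definition "r_h = Comp r_sub [Comp Succ [Proj 1], Comp r_tri [Comp Succ [Proj 0]]]"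
definition "r_s = Mini r_h"

lemma eval_h: "eval r_h [s, z] (Suc z - triangle (Suc s))"
  unfolding r_h_def
  by (rule evi eval_sub eval_tri | simp del: triangle_Suc)+

definition s0 :: "nat \<Rightarrow> nat" where "s0 z = (LEAST s. z < triangle (Suc s))"

lemma tri_ge: "n \<le> triangle n" by (induction n) auto

lemma s0_props: "triangle (s0 z) \<le> z" "z < triangle (Suc (s0 z))"
proof -
  have ex: "z < triangle (Suc z)" using tri_ge[of "Suc z"] by simp
  show "z < triangle (Suc (s0 z))" unfolding s0_def by (rule LeastI[of _ z]) (rule ex)
  show "triangle (s0 z) \<le> z"
  proof (cases "s0 z")
    case 0 then show ?thesis by simp
  next
    case (Suc m)
    then have "\<not> z < triangle (Suc m)" using not_less_Least[of m "\<lambda>s. z < triangle (Suc s)"]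
      unfolding s0_def by simp
    then show ?thesis using Suc by simp
  qed
qed

lemma eval_s: "eval r_s [z] (s0 z)"
  unfolding r_s_def
proof (rule eval_Mini_tot[OF eval_h])
  show "Suc z - triangle (Suc (s0 z)) = 0" using s0_props(2)[of z] by simp
  show "\<forall>y<s0 z. 0 < Suc z - triangle (Suc y)"
  proof (intro allI impI)
    fix y assume "y < s0 z"
    then have "\<not> z < triangle (Suc y)" using not_less_Least[of y "\<lambda>s. z < triangle (Suc s)"]
      unfolding s0_def by simp
    then show "0 < Suc z - triangle (Suc y)" by simp
  qed
qed

lemma decode_s0: "prod_decode z = (z - triangle (s0 z), s0 z - (z - triangle (s0 z)))"
proof -
  let ?m = "z - triangle (s0 z)"
  have m: "?m \<le> s0 z" using s0_props[of z] by simp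
  have "prod_encode (?m, s0 z - ?m) = z"
    using m s0_props(1)[of z] by (simp add: prod_encode_def)
  then show ?thesis by (metis prod_encode_inverse)
qed

definition "r_p1 = Comp r_sub [Proj 0, Comp r_tri [r_s]]"
definition "r_p2 = Comp r_sub [r_s, r_p1]"

lemma eval_p1: "y = p1 z \<Longrightarrow> eval r_p1 [z] y"
proof -
  have A: "eval r_p1 [z] (z - triangle (s0 z))" unfolding r_p1_def
    by (rule evi eval_sub eval_tri eval_s | simp del: triangle_Suc)+
  have "p1 z = z - triangle (s0 z)" by (simp add: p1_def decode_s0[of z])
  with A show "y = p1 z \<Longrightarrow> eval r_p1 [z] y" by simp
qed

lemma eval_p2: "y = p2 z \<Longrightarrow> eval r_p2 [z] y"
proof -
  have A: "eval r_p2 [z] (s0 z - p1 z)" unfolding r_p2_def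
    by (rule evi eval_sub eval_s eval_p1 | simp del: triangle_Suc)+
  have "p2 z = s0 z - p1 z" by (simp add: p1_def p2_def decode_s0[of z])
  with A show "y = p2 z \<Longrightarrow> eval r_p2 [z] y" by simp
qed

definition rc :: "(nat \<Rightarrow> nat) \<Rightarrow> bool" where "rc f \<longleftrightarrow> (\<exists>r. \<forall>z. eval r [z] (f z))"
definition rp :: "(nat \<Rightarrow> bool) \<Rightarrow> bool" where "rp P \<longleftrightarrow> rc (\<lambda>z. if P z then 1 else 0)"

lemma rc_cong: "rc f \<Longrightarrow> (\<And>z. f z = g z) \<Longrightarrow> rc g"
proof -
  assume "rc f" "\<And>z. f z = g z"
  then have "f = g" by auto
  with \<open>rc f\<close> show "rc g" by simp
qed

lemma rp_cong: "rp P \<Longrightarrow> (\<And>z. P z = Q z) \<Longrightarrow> rp Q"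
  unfolding rp_def by (erule rc_cong) simp

lemma rc_id: "rc (\<lambda>z. z)"
  unfolding rc_def by (rule exI[of _ "Proj 0"]) (simp add: eval_P0)

lemma rc_un: "(\<And>a y. y = F a \<Longrightarrow> eval r [a] y) \<Longrightarrow> rc f \<Longrightarrow> rc (\<lambda>z. F (f z))"
  unfolding rc_def
proof -
  assume R: "\<And>a y. y = F a \<Longrightarrow> eval r [a] y" and "\<exists>r. \<forall>z. eval r [z] (f z)"
  then obtain rf where rf: "\<forall>z. eval rf [z] (f z)" by blast
  show "\<exists>r. \<forall>z. eval r [z] (F (f z))"
    by (rule exI[of _ "Comp r [rf]"]) (use rf R in \<open>blast intro: eval_Comp1\<close>)
qed

lemma rc_bin: "(\<And>a b y. y = F a b \<Longrightarrow> eval r [a, b] y) \<Longrightarrow> rc f \<Longrightarrow> rc g \<Longrightarrow> rc (\<lambda>z. F (f z) (g z))"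
  unfolding rc_def
proof -
  assume R: "\<And>a b y. y = F a b \<Longrightarrow> eval r [a, b] y" and "\<exists>r. \<forall>z. eval r [z] (f z)"
    and "\<exists>r. \<forall>z. eval r [z] (g z)"
  then obtain rf rg where rf: "\<forall>z. eval rf [z] (f z)" and rg: "\<forall>z. eval rg [z] (g z)" by blast
  show "\<exists>r. \<forall>z. eval r [z] (F (f z) (g z))"
    by (rule exI[of _ "Comp r [rf, rg]"]) (use rf rg R in \<open>blast intro: eval_Comp2\<close>)
qed

lemma rc_comp: "rc f \<Longrightarrow> rc h \<Longrightarrow> rc (\<lambda>z. f (h z))"
proof -
  assume "rc f" "rc h"
  then obtain rf where rf: "\<forall>z. eval rf [z] (f z)" unfolding rc_def by blast
  show "rc (\<lambda>z. f (h z))" by (rule rc_un[of f rf h]) (use rf \<open>rc h\<close> in simp_all)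
qed

lemma rp_comp: "rp P \<Longrightarrow> rc h \<Longrightarrow> rp (\<lambda>z. P (h z))"
  unfolding rp_def by (drule rc_comp) auto

lemma rc_Suc: "rc f \<Longrightarrow> rc (\<lambda>z. Suc (f z))"
  by (rule rc_un[of _ Succ]) (simp add: eval_Succ)

lemma rc_const: "rc (\<lambda>z. c)"
proof (induction c)
  case 0
  show ?case unfolding rc_def by (rule exI[of _ Zero]) (simp add: eval_Zero)
next
  case (Suc c) then show ?case by (rule rc_Suc)
qed

lemma rc_add: "rc f \<Longrightarrow> rc g \<Longrightarrow> rc (\<lambda>z. f z + g z)"
  by (rule rc_bin[of _ r_add]) (simp add: eval_add)
lemma rc_sub: "rc f \<Longrightarrow> rc g \<Longrightarrow> rc (\<lambda>z. f z - g z)"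
  by (rule rc_bin[of _ r_sub]) (simp add: eval_sub)
lemma rc_pr: "rc f \<Longrightarrow> rc g \<Longrightarrow> rc (\<lambda>z. pr (f z) (g z))"
  by (rule rc_bin[of _ r_pr]) (simp add: eval_pr)
lemma rc_p1: "rc f \<Longrightarrow> rc (\<lambda>z. p1 (f z))"
  by (rule rc_un[of _ r_p1]) (simp add: eval_p1)
lemma rc_p2: "rc f \<Longrightarrow> rc (\<lambda>z. p2 (f z))"
  by (rule rc_un[of _ r_p2]) (simp add: eval_p2)

lemma rc_rec:
  assumes "rc a" "rc b" "rc (\<lambda>z. s (p1 z) (p1 (p2 z)) (p2 (p2 z)))"
  shows "rc (\<lambda>x. rec_nat (b x) (\<lambda>i acc. s i acc x) (a x))"
proof -
  obtain ra rb rs where ra: "\<forall>z. eval ra [z] (a z)" and rb: "\<forall>z. eval rb [z] (b z)"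
    and rs: "\<forall>z. eval rs [z] (s (p1 z) (p1 (p2 z)) (p2 (p2 z)))"
    using assms unfolding rc_def by blast
  define G where "G = Comp rs [Comp r_pr [Proj 0, Comp r_pr [Proj 1, Proj 2]]]"
  have G: "eval G [i, acc, x] (s i acc x)" for i acc x
  proof -
    have E: "eval rs [pr i (pr acc x)] (s i acc x)" using rs[rule_format, of "pr i (pr acc x)"] by simp
    show ?thesis unfolding G_def by (rule evi eval_pr E | simp)+
  qed
  have P: "eval (Prim rb G) [n, x] (rec_nat (b x) (\<lambda>i acc. s i acc x) n)" for n x
    by (rule eval_Prim_rec) (rule rb[rule_format], rule G)
  show ?thesis unfolding rc_def
    by (rule exI[of _ "Comp (Prim rb G) [ra, Proj 0]"]) (use ra P in \<open>blast intro: eval_Comp2 eval_P0\<close>)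
qed

lemma rc_least:
  assumes "rp (\<lambda>z. P (p1 z) (p2 z))" "\<And>x. \<exists>y. P y x"
  shows "rc (\<lambda>x. LEAST y. P y x)"
proof -
  obtain rP where rP: "\<forall>z. eval rP [z] (if P (p1 z) (p2 z) then 1 else 0)"
    using assms(1) unfolding rp_def rc_def by blast
  define H where "H = Comp r_sub [Comp Succ [Zero], Comp rP [Comp r_pr [Proj 0, Proj 1]]]"
  have H: "eval H [y, x] (if P y x then 0 else 1)" for y x
  proof -
    have E: "eval rP [pr y x] (if P y x then 1 else 0)" using rP[rule_format, of "pr y x"] by simp
    show ?thesis unfolding H_def by (rule evi eval_pr eval_sub E | simp)+
  qed
  have "eval (Mini H) [x] (LEAST y. P y x)" for x
  proof (rule eval_Mini_tot[OF H])
    show "(if P (LEAST y. P y x) x then 0 else 1) = (0::nat)"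
      using LeastI_ex[OF assms(2)[of x]] by simp
    show "\<forall>y<(LEAST y. P y x). 0 < (if P y x then 0 else 1::nat)"
    proof (intro allI impI)
      fix y assume "y < (LEAST y. P y x)"
      then have "\<not> P y x" by (rule not_less_Least)
      then show "0 < (if P y x then 0 else 1::nat)" by simp
    qed
  qed
  then show ?thesis unfolding rc_def by blast
qed

lemma rp_eq: assumes f: "rc f" and g: "rc g" shows "rp (\<lambda>z. f z = g z)"
proof -
  have "rc (\<lambda>z. 1 - ((f z - g z) + (g z - f z)))" by (rule rc_sub rc_add rc_const f g)+
  then show ?thesis unfolding rp_def by (rule rc_cong) auto
qed

lemma rp_less: assumes f: "rc f" and g: "rc g" shows "rp (\<lambda>z. f z < g z)"
proof -
  have "rc (\<lambda>z. 1 - (1 - (g z - f z)))" by (rule rc_sub rc_add rc_const f g)+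
  then show ?thesis unfolding rp_def by (rule rc_cong) auto
qed

lemma rp_le: "rc f \<Longrightarrow> rc g \<Longrightarrow> rp (\<lambda>z. f z \<le> g z)"
  by (rule rp_cong[OF rp_less[of f "\<lambda>z. Suc (g z)"]]) (auto intro: rc_Suc)

lemma rp_not: assumes P: "rp P" shows "rp (\<lambda>z. \<not> P z)"
proof -
  have "rc (\<lambda>z. 1 - (if P z then 1 else 0))" by (rule rc_sub rc_const P[unfolded rp_def])+
  then show ?thesis unfolding rp_def by (rule rc_cong) auto
qed

lemma rp_conj: assumes P: "rp P" and Q: "rp Q" shows "rp (\<lambda>z. P z \<and> Q z)"
proof -
  have "rc (\<lambda>z. 1 - ((1 - (if P z then 1 else 0)) + (1 - (if Q z then 1 else 0))))"
    by (rule rc_sub rc_add rc_const P[unfolded rp_def] Q[unfolded rp_def])+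
  then show ?thesis unfolding rp_def by (rule rc_cong) auto
qed

lemma rp_disj: assumes P: "rp P" and Q: "rp Q" shows "rp (\<lambda>z. P z \<or> Q z)"
proof -
  have "rp (\<lambda>z. \<not> (\<not> P z \<and> \<not> Q z))" by (rule rp_not rp_conj P Q)+
  then show ?thesis by (rule rp_cong) auto
qed

lemma rp_imp: assumes P: "rp P" and Q: "rp Q" shows "rp (\<lambda>z. P z \<longrightarrow> Q z)"
proof -
  have "rp (\<lambda>z. \<not> (P z \<and> \<not> Q z))" by (rule rp_not rp_conj P Q)+
  then show ?thesis by (rule rp_cong) auto
qed

lemma rp_const: "rp (\<lambda>z. c)"
  unfolding rp_def by (cases c) (simp_all add: rc_const)

lemma rc_if: "rp P \<Longrightarrow> rc f \<Longrightarrow> rc g \<Longrightarrow> rc (\<lambda>z. if P z then f z else g z)"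
proof -
  assume P: "rp P" and f: "rc f" and g: "rc g"
  have "rc (\<lambda>x. rec_nat (g x) (\<lambda>i acc. f x) (if P x then 1 else 0))"
    using rc_rec[of "\<lambda>z. if P z then 1 else 0" g "\<lambda>i acc x. f x"] P g rc_comp[OF f rc_p2[OF rc_p2[OF rc_id]]]
    unfolding rp_def by simp
  then show ?thesis by (rule rc_cong) simp
qed

lemma rp_ball:
  assumes "rp (\<lambda>z. P (p1 z) (p2 z))" "rc k"
  shows "rp (\<lambda>x. \<forall>i<k x. P i x)"
proof -
  have Q: "rp (\<lambda>z. P (p1 z) (p2 (p2 z)))"
    using rp_comp[OF assms(1) rc_pr[OF rc_p1[OF rc_id] rc_p2[OF rc_p2[OF rc_id]]]] by simp
  have "rc (\<lambda>z. if P (p1 z) (p2 (p2 z)) then p1 (p2 z) else 0)"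
    by (rule rc_if[OF Q rc_p1[OF rc_p2[OF rc_id]] rc_const])
  then have R: "rc (\<lambda>x. rec_nat 1 (\<lambda>i acc. if P i x then acc else 0) (k x))"
    using rc_rec[of k "\<lambda>z. 1" "\<lambda>i acc x. if P i x then acc else 0"] assms(2) rc_const by simp
  have E: "rec_nat 1 (\<lambda>i acc. if P i x then acc else 0) n = (if \<forall>i<n. P i x then 1 else 0)" for x n
    by (induction n) (auto simp: less_Suc_eq)
  show ?thesis unfolding rp_def by (rule rc_cong[OF R E])
qed

lemma rp_bex:
  assumes "rp (\<lambda>z. P (p1 z) (p2 z))" "rc k"
  shows "rp (\<lambda>x. \<exists>i<k x. P i x)"
proof -
  have "rp (\<lambda>x. \<not> (\<forall>i<k x. \<not> P i x))"
    by (rule rp_not, rule rp_ball[OF rp_not[OF assms(1)] assms(2)])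
  then show ?thesis by (rule rp_cong) auto
qed

lemma rc_lift2: "rc (\<lambda>z. F (p1 z) (p2 z)) \<Longrightarrow> rc f \<Longrightarrow> rc g \<Longrightarrow> rc (\<lambda>z. F (f z) (g z))"
  using rc_comp[of "\<lambda>z. F (p1 z) (p2 z)" "\<lambda>z. pr (f z) (g z)"] rc_pr by simp
lemma rp_lift2: "rp (\<lambda>z. F (p1 z) (p2 z)) \<Longrightarrow> rc f \<Longrightarrow> rc g \<Longrightarrow> rp (\<lambda>z. F (f z) (g z))"
  using rp_comp[of "\<lambda>z. F (p1 z) (p2 z)" "\<lambda>z. pr (f z) (g z)"] rc_pr by simp
lemma rc_lift1: "rc F \<Longrightarrow> rc f \<Longrightarrow> rc (\<lambda>z. F (f z))"
  by (rule rc_comp)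
lemma rp_lift1: "rp F \<Longrightarrow> rc f \<Longrightarrow> rp (\<lambda>z. F (f z))"
  by (rule rp_comp)

definition cons :: "nat \<Rightarrow> nat \<Rightarrow> nat" where "cons a l = Suc (pr a l)"
definition hdc :: "nat \<Rightarrow> nat" where "hdc c = p1 (c - 1)"
definition tlc :: "nat \<Rightarrow> nat" where "tlc c = p2 (c - 1)"
definition itl :: "nat \<Rightarrow> nat \<Rightarrow> nat" where "itl c n = rec_nat c (\<lambda>i acc. tlc acc) n"
definition nthc :: "nat \<Rightarrow> nat \<Rightarrow> nat" where "nthc c j = hdc (itl c j)"
definition lenc :: "nat \<Rightarrow> nat" where "lenc c = (LEAST n. itl c n = 0)"

primrec lc :: "nat list \<Rightarrow> nat" where
  "lc [] = 0"
| "lc (x # xs) = cons x (lc xs)"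

lemma hdc_cons[simp]: "hdc (cons a l) = a" by (simp add: hdc_def cons_def)
lemma tlc_cons[simp]: "tlc (cons a l) = l" by (simp add: tlc_def cons_def)
lemma cons_ne0[simp]: "cons a l \<noteq> 0" "0 \<noteq> cons a l" by (simp_all add: cons_def)
lemma cons_eq[simp]: "cons a l = cons b m \<longleftrightarrow> a = b \<and> l = m" by (simp add: cons_def)
lemma tlc_le: "tlc c \<le> c - 1" by (simp add: tlc_def p2_le)
lemma cons_hd_tl: "c \<noteq> 0 \<Longrightarrow> cons (hdc c) (tlc c) = c" by (simp add: cons_def hdc_def tlc_def)

lemma itl_0[simp]: "itl c 0 = c" by (simp add: itl_def)
lemma itl_Suc[simp]: "itl c (Suc n) = tlc (itl c n)" by (simp add: itl_def)

lemma tlc_lc[simp]: "tlc (lc xs) = lc (tl xs)"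
proof (cases xs)
  case Nil
  have "p2 0 = 0" using p2_le[of 0] by simp
  then show ?thesis using Nil by (simp add: tlc_def)
qed simp

lemma itl_lc: "itl (lc xs) n = lc (drop n xs)"
  by (induction n) (auto simp: drop_Suc tl_drop)

lemma lc_0_iff[simp]: "lc xs = 0 \<longleftrightarrow> xs = []" by (cases xs) auto

lemma lc_inj[simp]: "lc xs = lc ys \<longleftrightarrow> xs = ys"
proof (induction xs arbitrary: ys)
  case Nil then show ?case by (cases ys) auto
next
  case (Cons x xs) then show ?case by (cases ys) auto
qed

lemma lc_surj: "\<exists>xs. lc xs = c"
proof (induction c rule: less_induct)
  case (less c)
  show ?case
  proof (cases "c = 0")
    case True then show ?thesis by (auto intro: exI[of _ "[]"])
  next
    case False
    then have "tlc c < c" using tlc_le[of c] by simp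
    then obtain xs where "lc xs = tlc c" using less by blast
    then have "lc (hdc c # xs) = c" using cons_hd_tl[OF False] by simp
    then show ?thesis by blast
  qed
qed

lemma nthc_lc[simp]: "j < length xs \<Longrightarrow> nthc (lc xs) j = xs ! j"
  by (simp add: nthc_def itl_lc hd_drop_conv_nth[symmetric]) (cases "drop j xs", auto simp: hd_drop_conv_nth)

lemma lenc_lc[simp]: "lenc (lc xs) = length xs"
  unfolding lenc_def itl_lc by (rule Least_equality) auto

lemma hdc_lc[simp]: "xs \<noteq> [] \<Longrightarrow> hdc (lc xs) = hd xs" by (cases xs) auto
lemma cons_lc: "cons a (lc xs) = lc (a # xs)" by simp

lemma itl_le: "itl c n \<le> c - n"
proof (induction n)
  case 0 then show ?case by simp
next
  case (Suc n) then show ?case using tlc_le[of "itl c n"] by simp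
qed

section \<open>Computability of the list operations\<close>

lemma rc_cons: "rc f \<Longrightarrow> rc g \<Longrightarrow> rc (\<lambda>z. cons (f z) (g z))"
  unfolding cons_def by (intro rc_Suc rc_pr)
lemma rc_hdc: "rc f \<Longrightarrow> rc (\<lambda>z. hdc (f z))"
  unfolding hdc_def by (intro rc_p1 rc_sub rc_const)
lemma rc_tlc: "rc f \<Longrightarrow> rc (\<lambda>z. tlc (f z))"
  unfolding tlc_def by (intro rc_p2 rc_sub rc_const)

lemma rc_itl0: "rc (\<lambda>z. itl (p1 z) (p2 z))"
  unfolding itl_def
  by (rule rc_rec[of p2 p1 "\<lambda>i acc x. tlc acc"]) (intro rc_p1 rc_p2 rc_tlc rc_id)+
lemma rc_itl: "rc f \<Longrightarrow> rc g \<Longrightarrow> rc (\<lambda>z. itl (f z) (g z))"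
  by (rule rc_lift2[OF rc_itl0])
lemma rc_nthc: "rc f \<Longrightarrow> rc g \<Longrightarrow> rc (\<lambda>z. nthc (f z) (g z))"
  unfolding nthc_def by (intro rc_hdc rc_itl)
lemma rc_lenc0: "rc lenc"
  unfolding lenc_def
proof (rule rc_least[where P="\<lambda>n c. itl c n = 0"])
  show "rp (\<lambda>z. itl (p2 z) (p1 z) = 0)" by (intro rp_eq rc_itl rc_p1 rc_p2 rc_id rc_const)
  show "\<exists>y. itl x y = 0" for x using itl_le[of x x] by auto
qed
lemma rc_lenc: "rc f \<Longrightarrow> rc (\<lambda>z. lenc (f z))"
  by (rule rc_lift1[OF rc_lenc0])

fun enc :: "recf \<Rightarrow> nat" where
  "enc Zero = pr 0 0"
| "enc Succ = pr 1 0"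
| "enc (Proj i) = pr 2 i"
| "enc (Comp f gs) = pr 3 (pr (enc f) (lc (map enc gs)))"
| "enc (Prim f g) = pr 4 (pr (enc f) (enc g))"
| "enc (Mini f) = pr 5 (enc f)"

definition hasP :: "nat \<Rightarrow> nat \<Rightarrow> (nat \<Rightarrow> bool) \<Rightarrow> bool" where
  "hasP w i P \<longleftrightarrow> (\<exists>k<i. P (p1 (nthc w k)))"

definition V :: "nat \<Rightarrow> ((nat \<Rightarrow> bool) \<Rightarrow> bool) \<Rightarrow> bool" where
  "V E m \<longleftrightarrow> (let J = p1 E; aux = p2 E; c = p1 J; xsc = p1 (p2 J); y = p2 (p2 J);
      tag = p1 c; dat = p2 c in
    (tag = 0 \<and> y = 0) \<or>
    (tag = 1 \<and> xsc \<noteq> 0 \<and> y = Suc (hdc xsc)) \<or>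
    (tag = 2 \<and> dat < lenc xsc \<and> y = nthc xsc dat) \<or>
    (tag = 3 \<and> lenc aux = lenc (p2 dat) \<and> m (\<lambda>X. X = pr (p1 dat) (pr aux y)) \<and>
        (\<forall>j<lenc (p2 dat). m (\<lambda>X. X = pr (nthc (p2 dat) j) (pr xsc (nthc aux j))))) \<or>
    (tag = 4 \<and> xsc \<noteq> 0 \<and> hdc xsc = 0 \<and> m (\<lambda>X. X = pr (p1 dat) (pr (tlc xsc) y))) \<or>
    (tag = 4 \<and> xsc \<noteq> 0 \<and> hdc xsc \<noteq> 0 \<and>
        m (\<lambda>X. X = pr c (pr (cons (hdc xsc - 1) (tlc xsc)) aux)) \<and>
        m (\<lambda>X. X = pr (p2 dat) (pr (cons (hdc xsc - 1) (cons aux (tlc xsc))) y))) \<or>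
    (tag = 5 \<and> m (\<lambda>X. X = pr dat (pr (cons y xsc) 0)) \<and>
        (\<forall>z<y. m (\<lambda>X. p1 X = dat \<and> p1 (p2 X) = cons z xsc \<and> 0 < p2 (p2 X)))))"

definition vat :: "nat \<Rightarrow> nat \<Rightarrow> bool" where
  "vat w i \<longleftrightarrow> V (nthc w i) (hasP w i)"

definition valid :: "nat \<Rightarrow> bool" where
  "valid w \<longleftrightarrow> (\<forall>i<lenc w. vat w i)"

definition inS :: "nat set \<Rightarrow> (nat \<Rightarrow> bool) \<Rightarrow> bool" where
  "inS S P \<longleftrightarrow> (\<exists>J\<in>S. P J)"

definition vl :: "nat list \<Rightarrow> bool" where
  "vl L \<longleftrightarrow> (\<forall>i<length L. V (L ! i) (inS (p1 ` set (take i L))))"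

lemma hasP_lc: "i \<le> length L \<Longrightarrow> hasP (lc L) i P = (\<exists>J\<in>p1 ` set (take i L). P J)"
  unfolding hasP_def
proof
  assume i: "i \<le> length L" and "\<exists>k<i. P (p1 (nthc (lc L) k))"
  then obtain k where k: "k < i" "P (p1 (nthc (lc L) k))" by blast
  have kl: "k < length L" using k i by simp
  have "take i L ! k = L ! k" using k by simp
  moreover have "k < length (take i L)" using k kl by simp
  ultimately have "L ! k \<in> set (take i L)" by (metis nth_mem)
  moreover have "P (p1 (L ! k))" using k kl by simp
  ultimately show "\<exists>J\<in>p1 ` set (take i L). P J" by blast
next
  assume i: "i \<le> length L" and "\<exists>J\<in>p1 ` set (take i L). P J"
  then obtain x where x: "x \<in> set (take i L)" "P (p1 x)" by blast
  then obtain k where k: "k < length (take i L)" "take i L ! k = x" by (metis in_set_conv_nth)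
  then have "k < i" "k < length L" by simp_all
  moreover have "nthc (lc L) k = x" using k \<open>k < length L\<close> by simp
  ultimately show "\<exists>k<i. P (p1 (nthc (lc L) k))" using x by blast
qed

lemma hasP_lc': assumes "i \<le> length L" shows "hasP (lc L) i = inS (p1 ` set (take i L))"
proof (rule ext)
  fix P
  show "hasP (lc L) i P = inS (p1 ` set (take i L)) P" unfolding inS_def by (rule hasP_lc[OF assms])
qed

lemma valid_lc: "valid (lc L) \<longleftrightarrow> vl L"
proof -
  have E: "vat (lc L) i = V (L ! i) (inS (p1 ` set (take i L)))" if "i < length L" for i
  proof -
    have "hasP (lc L) i = inS (p1 ` set (take i L))" using that by (intro hasP_lc') simp
    then show ?thesis unfolding vat_def using that by simp
  qed
  show ?thesis unfolding valid_def vl_def lenc_lc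
  proof
    assume "\<forall>i<length L. vat (lc L) i" then show "\<forall>i<length L. V (L ! i) (inS (p1 ` set (take i L)))"
      using E by blast
  next
    assume "\<forall>i<length L. V (L ! i) (inS (p1 ` set (take i L)))" then show "\<forall>i<length L. vat (lc L) i"
      using E by blast
  qed
qed

lemma V_mono:
  assumes "V E m" "\<And>P. m P \<Longrightarrow> m' P"
  shows "V E m'"
proof -
  have m: "m P \<Longrightarrow> m' P" for P by (rule assms(2))
  show ?thesis using assms(1) unfolding V_def Let_def
    apply (elim disjE conjE)
          apply (rule disjI1;blast intro: m)
         apply (rule disjI2, rule disjI1;blast intro: m)
        apply (rule disjI2, rule disjI2, rule disjI1;blast intro: m)
       apply (rule disjI2, rule disjI2, rule disjI2, rule disjI1; blast intro: m)
      apply (rule disjI2, rule disjI2, rule disjI2, rule disjI2, rule disjI1; blast intro: m)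
     apply (rule disjI2, rule disjI2, rule disjI2, rule disjI2, rule disjI2, rule disjI1; blast intro: m)
    apply (rule disjI2, rule disjI2, rule disjI2, rule disjI2, rule disjI2, rule disjI2; blast intro: m)
    done
qed

lemma vl_append: "vl A \<Longrightarrow> vl B \<Longrightarrow> vl (A @ B)"
  unfolding vl_def
proof (intro allI impI)
  fix i assume A: "\<forall>i<length A. V (A ! i) (inS (p1 ` set (take i A)))"
    and B: "\<forall>i<length B. V (B ! i) (inS (p1 ` set (take i B)))"
    and i: "i < length (A @ B)"
  show "V ((A @ B) ! i) (inS (p1 ` set (take i (A @ B))))"
  proof (cases "i < length A")
    case True
    then show ?thesis using A by (simp add: nth_append)
  next
    case False
    then have j: "i - length A < length B" using i by simp
    have "V (B ! (i - length A)) (inS (p1 ` set (take (i - length A) B)))" using B j by blast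
    then have "V (B ! (i - length A)) (inS (p1 ` set (take i (A @ B))))"
      by (rule V_mono) (use False in \<open>auto simp: inS_def\<close>)
    then show ?thesis using False by (simp add: nth_append)
  qed
qed

lemma vl_snoc: "vl L \<Longrightarrow> V E (inS (p1 ` set L)) \<Longrightarrow> vl (L @ [E])"
  unfolding vl_def
proof (intro allI impI)
  fix i assume A: "\<forall>i<length L. V (L ! i) (inS (p1 ` set (take i L)))"
    and E: "V E (inS (p1 ` set L))" and i: "i < length (L @ [E])"
  show "V ((L @ [E]) ! i) (inS (p1 ` set (take i (L @ [E]))))"
  proof (cases "i < length L")
    case True
    then show ?thesis using A by (simp add: nth_append)
  next
    case False
    then have "i = length L" using i by simp
    then show ?thesis using E by simp
  qed
qed

lemma vl_Nil: "vl []" by (simp add: vl_def)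

lemma inS_eq[simp]: "inS S (\<lambda>X. X = a) \<longleftrightarrow> a \<in> S" by (auto simp: inS_def)

lemma enc_tags[simp]:
  "p1 (enc Zero) = 0" "p1 (enc Succ) = 1" "p1 (enc (Proj n)) = 2" "p1 (enc (Comp f gs)) = 3"
  "p1 (enc (Prim f g)) = 4" "p1 (enc (Mini f)) = 5"
  "p2 (enc (Proj n)) = n" "p2 (enc (Comp f gs)) = pr (enc f) (lc (map enc gs))"
  "p2 (enc (Prim f g)) = pr (enc f) (enc g)" "p2 (enc (Mini f)) = enc f"
  by simp_all

lemma enc_inj: "enc r = enc r' \<Longrightarrow> r = r'"
proof (induction r arbitrary: r')
  case Zero then show ?case by (cases r') auto
next
  case Succ then show ?case by (cases r') auto
next
  case (Proj x) then show ?case by (cases r') auto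
next
  case (Comp f gs)
  then show ?case
  proof (cases r')
    case (Comp f' gs')
    with Comp.prems have "enc f = enc f'" "map enc gs = map enc gs'" by auto
    then have "f = f'" using Comp.IH(1) by blast
    moreover have "gs = gs'" using \<open>map enc gs = map enc gs'\<close> Comp.IH(2)
    proof (induction gs arbitrary: gs')
      case Nil then show ?case by simp
    next
      case (Cons a gs) then show ?case by (cases gs') auto
    qed
    ultimately show ?thesis using Comp by simp
  qed auto
next
  case (Prim f g) then show ?case by (cases r') auto
next
  case (Mini f) then show ?case by (cases r') auto
qed

lemma sound:
  assumes "vl L"
  shows "i < length L \<Longrightarrow> p1 (L ! i) = pr (enc r) (pr (lc xs) y) \<Longrightarrow> eval r xs y"
proof (induction i arbitrary: r xs y rule: less_induct)
  case (less i)
  let ?S = "p1 ` set (take i L)"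
  have V: "V (L ! i) (inS ?S)" using assms less.prems(1) unfolding vl_def by blast
  have IH: "eval r xs y" if h: "pr (enc r) (pr (lc xs) y) \<in> ?S" for r xs y
  proof -
    obtain x where x: "x \<in> set (take i L)" "p1 x = pr (enc r) (pr (lc xs) y)" using h by (metis imageE)
    then obtain k where k: "k < length (take i L)" "take i L ! k = x" by (metis in_set_conv_nth)
    then have "k < i" "L ! k = x" using less.prems(1) by auto
    then show ?thesis using less.IH[of k r xs y] x less.prems(1) by simp
  qed
  have IH2: "eval r xs y" if h: "inS ?S (\<lambda>X. p1 X = enc r \<and> p1 (p2 X) = lc xs \<and> p2 (p2 X) = y)" for r xs y
  proof -
    from h obtain X where "X \<in> ?S" "p1 X = enc r" "p1 (p2 X) = lc xs" "p2 (p2 X) = y"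
      unfolding inS_def by blast
    then have "pr (enc r) (pr (lc xs) y) \<in> ?S" by (metis pr_p12)
    then show ?thesis by (rule IH)
  qed
  note pE = less.prems(2)
  show ?case
  proof (cases r)
    case Zero
    then have "y = 0" using V pE unfolding V_def Let_def by simp
    then show ?thesis using Zero by (simp add: eval_Zero)
  next
    case Succ
    then have "lc xs \<noteq> 0 \<and> y = Suc (hdc (lc xs))" using V pE unfolding V_def Let_def by simp
    then obtain x xs' where "xs = x # xs'" "y = Suc x" by (cases xs) auto
    then show ?thesis using Succ by (simp add: eval_Succ)
  next
    case (Proj n)
    then have "n < lenc (lc xs) \<and> y = nthc (lc xs) n" using V pE unfolding V_def Let_def by simp
    then show ?thesis using Proj by (simp add: eval_Proj)
  next
    case (Comp f gs)
    let ?aux = "p2 (L ! i)"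
    obtain ys where ys: "lc ys = ?aux" using lc_surj by blast
    have C: "lenc ?aux = length gs \<and> pr (enc f) (pr ?aux y) \<in> ?S \<and>
        (\<forall>j<length gs. pr (nthc (lc (map enc gs)) j) (pr (lc xs) (nthc ?aux j)) \<in> ?S)"
      using V pE Comp unfolding V_def Let_def by simp
    then have len: "length ys = length gs" using ys[symmetric] by simp
    have "eval f ys y" using C ys IH by metis
    moreover have "list_all2 (\<lambda>g y. eval g xs y) gs ys"
    proof (rule list_all2_all_nthI)
      show "length gs = length ys" using len by simp
      fix j assume j: "j < length gs"
      then have "pr (enc (gs ! j)) (pr (lc xs) (ys ! j)) \<in> ?S"
        using C ys[symmetric] len by simp
      then show "eval (gs ! j) xs (ys ! j)" by (rule IH)
    qed
    ultimately show ?thesis using Comp by (blast intro: eval_Comp)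
  next
    case (Prim f g)
    let ?aux = "p2 (L ! i)"
    have C: "(lc xs \<noteq> 0 \<and> hdc (lc xs) = 0 \<and> pr (enc f) (pr (tlc (lc xs)) y) \<in> ?S) \<or>
       (lc xs \<noteq> 0 \<and> hdc (lc xs) \<noteq> 0 \<and>
        pr (enc (Prim f g)) (pr (cons (hdc (lc xs) - 1) (tlc (lc xs))) ?aux) \<in> ?S \<and>
        pr (enc g) (pr (cons (hdc (lc xs) - 1) (cons ?aux (tlc (lc xs)))) y) \<in> ?S)"
      using V pE Prim unfolding V_def Let_def by simp
    then obtain x xs' where xs: "xs = x # xs'" by (cases xs) auto
    show ?thesis
    proof (cases "x = 0")
      case True
      then have "pr (enc f) (pr (lc xs') y) \<in> ?S" using C xs by simp
      then have "eval f xs' y" by (rule IH)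
      then show ?thesis using xs True Prim by (simp add: eval_Prim0)
    next
      case False
      then have "pr (enc (Prim f g)) (pr (lc ((x - 1) # xs')) ?aux) \<in> ?S"
        "pr (enc g) (pr (lc ((x - 1) # ?aux # xs')) y) \<in> ?S"
        using C xs by simp_all
      then have "eval (Prim f g) ((x - 1) # xs') ?aux" "eval g ((x - 1) # ?aux # xs') y"
        by (auto intro: IH)
      then have "eval (Prim f g) (Suc (x - 1) # xs') y" by (rule eval_PrimS)
      then show ?thesis using xs False Prim by simp
    qed
  next
    case (Mini f)
    have C: "pr (enc f) (pr (cons y (lc xs)) 0) \<in> ?S \<and>
        (\<forall>z<y. inS ?S (\<lambda>X. p1 X = enc f \<and> p1 (p2 X) = cons z (lc xs) \<and> 0 < p2 (p2 X)))"
      using V pE Mini unfolding V_def Let_def by simp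
    have "pr (enc f) (pr (lc (y # xs)) 0) \<in> ?S" using C by simp
    then have "eval f (y # xs) 0" by (rule IH)
    moreover have "\<forall>z<y. \<exists>w>0. eval f (z # xs) w"
    proof (intro allI impI)
      fix z assume "z < y"
      then obtain X where X: "X \<in> ?S" "p1 X = enc f" "p1 (p2 X) = lc (z # xs)" "0 < p2 (p2 X)"
        using C unfolding inS_def by auto
      then have "eval f (z # xs) (p2 (p2 X))" by (intro IH2) (auto simp: inS_def)
      then show "\<exists>w>0. eval f (z # xs) w" using X(4) by blast
    qed
    ultimately show ?thesis using Mini by (simp add: eval_Mini)
  qed
qed

lemma cons_pos[simp]: "0 < cons a l" by (simp add: cons_def)

lemma collect:
  fixes n :: nat
  assumes "\<forall>z<n. \<exists>L. vl L \<and> Q z (p1 ` set L)"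
    and mono: "\<And>z S S'. Q z S \<Longrightarrow> S \<subseteq> S' \<Longrightarrow> Q z S'"
  shows "\<exists>L. vl L \<and> (\<forall>z<n. Q z (p1 ` set L))"
  using assms(1)
proof (induction n)
  case 0 then show ?case using vl_Nil by blast
next
  case (Suc n)
  then obtain L where L: "vl L" "\<forall>z<n. Q z (p1 ` set L)" by auto
  obtain L' where L': "vl L'" "Q n (p1 ` set L')" using Suc.prems by blast
  have "vl (L @ L')" using L L' vl_append by blast
  moreover have "\<forall>z<Suc n. Q z (p1 ` set (L @ L'))"
  proof (intro allI impI)
    fix z assume "z < Suc n"
    then show "Q z (p1 ` set (L @ L'))"
    proof (cases "z < n")
      case True
      then show ?thesis using L(2) by (auto elim!: mono)
    next
      case False
      then have "z = n" using \<open>z < Suc n\<close> by simp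
      then show ?thesis using L'(2) by (auto elim!: mono)
    qed
  qed
  ultimately show ?case by blast
qed

lemma finish:
  assumes "vl L" "V (pr J aux) (inS (p1 ` set L))"
  shows "\<exists>L'. vl L' \<and> J \<in> p1 ` set L'"
proof -
  have "vl (L @ [pr J aux])" by (rule vl_snoc[OF assms])
  moreover have "J \<in> p1 ` set (L @ [pr J aux])" by (auto intro: image_eqI[of _ _ "pr J aux"])
  ultimately show ?thesis by blast
qed

lemma complete: "eval r xs y \<Longrightarrow> \<exists>L. vl L \<and> pr (enc r) (pr (lc xs) y) \<in> p1 ` set L"
proof (induction rule: eval.induct)
  case (eval_Zero xs)
  show ?case by (rule finish[OF vl_Nil, where aux=0]) (simp add: V_def)
next
  case (eval_Succ x xs)
  show ?case by (rule finish[OF vl_Nil, where aux=0]) (simp add: V_def)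
next
  case (eval_Proj i xs)
  show ?case by (rule finish[OF vl_Nil, where aux=0]) (use eval_Proj in \<open>simp add: V_def\<close>)
next
  case (eval_Comp xs gs ys f z)
  have len: "length gs = length ys" using eval_Comp.IH(1) by (rule list_all2_lengthD)
  have "\<forall>j<length gs. \<exists>L. vl L \<and> pr (enc (gs ! j)) (pr (lc xs) (ys ! j)) \<in> p1 ` set L"
    using eval_Comp.IH(1) by (auto simp: list_all2_conv_all_nth)
  then obtain L1 where L1: "vl L1" "\<forall>j<length gs. pr (enc (gs ! j)) (pr (lc xs) (ys ! j)) \<in> p1 ` set L1"
    using collect[where Q="\<lambda>j S. pr (enc (gs ! j)) (pr (lc xs) (ys ! j)) \<in> S" and n="length gs"]
    by blast
  obtain L2 where L2: "vl L2" "pr (enc f) (pr (lc ys) z) \<in> p1 ` set L2" using eval_Comp.IH(2) by blast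
  let ?L = "L1 @ L2"
  have vL: "vl ?L" using L1 L2 vl_append by blast
  have "V (pr (pr (enc (Comp f gs)) (pr (lc xs) z)) (lc ys)) (inS (p1 ` set ?L))"
    unfolding V_def Let_def using L1(2) L2(2) len by auto
  then show ?case by (rule finish[OF vL])
next
  case (eval_Prim0 f xs y g)
  then obtain L where L: "vl L" "pr (enc f) (pr (lc xs) y) \<in> p1 ` set L" by blast
  have "V (pr (pr (enc (Prim f g)) (pr (lc (0 # xs)) y)) 0) (inS (p1 ` set L))"
    unfolding V_def Let_def using L(2) by simp
  then show ?case by (rule finish[OF L(1)])
next
  case (eval_PrimS f g n xs y z)
  obtain L1 where L1: "vl L1" "pr (enc (Prim f g)) (pr (lc (n # xs)) y) \<in> p1 ` set L1"
    using eval_PrimS.IH(1) by blast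
  obtain L2 where L2: "vl L2" "pr (enc g) (pr (lc (n # y # xs)) z) \<in> p1 ` set L2"
    using eval_PrimS.IH(2) by blast
  let ?L = "L1 @ L2"
  have vL: "vl ?L" using L1 L2 vl_append by blast
  have "V (pr (pr (enc (Prim f g)) (pr (lc (Suc n # xs)) z)) y) (inS (p1 ` set ?L))"
    unfolding V_def Let_def using L1(2) L2(2) by (simp add: image_Un)
  then show ?case by (rule finish[OF vL])
next
  case (eval_Mini f y xs)
  have "\<forall>z<y. \<exists>L. vl L \<and> (\<exists>w>0. pr (enc f) (pr (lc (z # xs)) w) \<in> p1 ` set L)"
    using eval_Mini.IH(2) by blast
  then obtain L1 where L1: "vl L1" "\<forall>z<y. \<exists>w>0. pr (enc f) (pr (lc (z # xs)) w) \<in> p1 ` set L1"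
    using collect[where Q="\<lambda>z S. \<exists>w>0. pr (enc f) (pr (lc (z # xs)) w) \<in> S" and n=y]
    by blast
  obtain L2 where L2: "vl L2" "pr (enc f) (pr (lc (y # xs)) 0) \<in> p1 ` set L2"
    using eval_Mini.IH(1) by blast
  let ?L = "L1 @ L2"
  have vL: "vl ?L" using L1 L2 vl_append by blast
  have M: "inS (p1 ` set ?L) (\<lambda>X. p1 X = enc f \<and> p1 (p2 X) = cons z (lc xs) \<and> 0 < p2 (p2 X))"
    if zy: "z < y" for z
  proof -
    obtain w where w: "w > 0" "pr (enc f) (pr (lc (z # xs)) w) \<in> p1 ` set L1" using L1(2) zy by blast
    then have "pr (enc f) (pr (lc (z # xs)) w) \<in> p1 ` set ?L" by auto
    with w(1) have "w > 0" "pr (enc f) (pr (lc (z # xs)) w) \<in> p1 ` set ?L" by auto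
    then show ?thesis unfolding inS_def by (intro bexI[of _ "pr (enc f) (pr (lc (z # xs)) w)"]) auto
  qed
  have "V (pr (pr (enc (Mini f)) (pr (lc xs) y)) 0) (inS (p1 ` set ?L))"
    unfolding V_def Let_def using L2(2) M by (simp add: image_Un)
  then show ?case by (rule finish[OF vL])
qed

lemmas rci = rc_const rc_id rp_const rc_Suc rc_add rc_sub rc_pr rc_p1 rc_p2 rc_cons rc_hdc rc_tlc rc_nthc rc_lenc
  rc_itl rc_if rp_conj rp_disj rp_imp rp_not rp_ball rp_bex rp_eq rp_less rp_le

lemma rp_vat0: "rp (\<lambda>z. vat (p1 z) (p2 z))"
  unfolding vat_def V_def hasP_def Let_def
  by (rule rci)+

lemma rp_valid0: "rp valid"
proof -
  have sw: "rp (\<lambda>z. vat (p2 z) (p1 z))" by (rule rp_lift2[OF rp_vat0]) (rule rci)+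
  have "rp (\<lambda>w. \<forall>i<lenc w. vat w i)" by (rule rp_ball[OF sw]) (rule rci)+
  then show ?thesis unfolding valid_def .
qed

lemma rp_valid: "rc f \<Longrightarrow> rp (\<lambda>z. valid (f z))"
  by (rule rp_lift1[OF rp_valid0])

lemma div2_least: "(LEAST q. x < Suc (Suc (q + q))) = x div (2::nat)"
  by (rule Least_equality) auto

lemma rc_div2_0: "rc (\<lambda>x. x div 2)"
proof -
  have "rc (\<lambda>x. LEAST q. x < Suc (Suc (q + q)))"
  proof (rule rc_least[where P="\<lambda>q x. x < Suc (Suc (q + q))"])
    show "rp (\<lambda>z. p2 z < Suc (Suc (p1 z + p1 z)))" by (rule rci)+
    show "\<exists>y. x < Suc (Suc (y + y))" for x by (rule exI[of _ x]) simp
  qed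
  then show ?thesis by (simp add: div2_least)
qed

lemma rc_div2: "rc f \<Longrightarrow> rc (\<lambda>z. f z div 2)"
  by (rule rc_lift1[OF rc_div2_0])

lemma rp_even: assumes "rc f" shows "rp (\<lambda>z. even (f z))"
proof -
  have "rp (\<lambda>z. f z = f z div 2 + f z div 2)" by (rule rci rc_div2 assms)+
  then show ?thesis by (rule rp_cong) presburger
qed

definition hN :: "nat \<Rightarrow> nat \<Rightarrow> nat" where "hN N k = rec_nat N (\<lambda>i acc. (acc - 1) div 2) k"

lemma hN_0[simp]: "hN N 0 = N" by (simp add: hN_def)
lemma hN_Suc[simp]: "hN N (Suc k) = (hN N k - 1) div 2" by (simp add: hN_def)

lemma rc_hN0: "rc (\<lambda>z. hN (p1 z) (p2 z))"
  unfolding hN_def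
  by (rule rc_rec[of p2 p1 "\<lambda>i acc x. (acc - 1) div 2"]) (rule rci rc_div2)+
lemma rc_hN: "rc f \<Longrightarrow> rc g \<Longrightarrow> rc (\<lambda>z. hN (f z) (g z))"
  by (rule rc_lift2[OF rc_hN0])

lemma hN_le: "hN N k \<le> N - k" by (induction k) auto

definition eN :: "nat \<Rightarrow> nat" where "eN N = (LEAST k. hN N k = 0 \<or> odd (hN N k))"

lemma rc_eN0: "rc eN"
  unfolding eN_def
proof (rule rc_least[where P="\<lambda>k N. hN N k = 0 \<or> odd (hN N k)"])
  show "rp (\<lambda>z. hN (p2 z) (p1 z) = 0 \<or> odd (hN (p2 z) (p1 z)))" by (rule rci rc_hN rp_even)+
  show "\<exists>y. hN x y = 0 \<or> odd (hN x y)" for x using hN_le[of x x] by auto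
qed
lemma rc_eN: "rc f \<Longrightarrow> rc (\<lambda>z. eN (f z))" by (rule rc_lift1[OF rc_eN0])

definition PN :: "nat \<Rightarrow> nat" where "PN N = (hN N (eN N) - 1) div 2"
definition okN :: "nat \<Rightarrow> bool" where "okN N \<longleftrightarrow> odd (hN N (eN N))"

definition res :: "nat \<Rightarrow> nat" where "res v = p2 (p2 (p1 (nthc (p1 v) (p2 v))))"

definition Wt :: "nat \<Rightarrow> nat \<Rightarrow> bool" where
  "Wt N v \<longleftrightarrow> okN N \<and> valid (p1 v) \<and> p2 v < lenc (p1 v) \<and>
     p1 (p1 (nthc (p1 v) (p2 v))) = eN N \<and> lenc (p1 (p2 (p1 (nthc (p1 v) (p2 v))))) = 2 \<and>
     hdc (p1 (p2 (p1 (nthc (p1 v) (p2 v))))) = PN N"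

definition Good :: "('d \<Rightarrow> 'd \<Rightarrow> bool) \<Rightarrow> (nat \<Rightarrow> 'd) \<Rightarrow> nat \<Rightarrow> nat \<Rightarrow> nat \<Rightarrow> bool" where
  "Good lt \<rho> N t v \<longleftrightarrow> v < t \<and> Wt N v \<and>
     (\<forall>v'<t. Wt N v' \<longrightarrow> (res v' = res v \<or> lt (\<rho> (res v')) (\<rho> (res v))))"

lemma rp_ltD:
  assumes rl: "\<forall>m n. eval rl [m, n] (if lt (\<rho> m) (\<rho> n) then 1 else 0)"
  shows "rc f \<Longrightarrow> rc g \<Longrightarrow> rp (\<lambda>z. lt (\<rho> (f z)) (\<rho> (g z)))"
  unfolding rp_def by (rule rc_bin[of _ rl]) (use rl in simp)

lemma rc_res: "rc f \<Longrightarrow> rc (\<lambda>z. res (f z))"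
  unfolding res_def by (rule rci | assumption)+

lemma rp_Wt: "rc f \<Longrightarrow> rc g \<Longrightarrow> rp (\<lambda>z. Wt (f z) (g z))"
  unfolding Wt_def okN_def PN_def by (rule rci rc_hN rc_eN rc_div2 rp_even rp_valid | assumption)+

lemma rp_Good:
  assumes rl: "\<forall>m n. eval rl [m, n] (if lt (\<rho> m) (\<rho> n) then 1 else 0)"
  shows "rp (\<lambda>z. Good lt \<rho> (p1 (p2 z)) (p2 (p2 z)) (p1 z))"
  unfolding Good_def by (rule rci rp_Wt rc_res rp_ltD[where rl=rl and lt=lt and \<rho>=\<rho>, OF rl] | assumption)+

definition qc :: "nat \<Rightarrow> bool list \<Rightarrow> bool list" where "qc E p = replicate E True @ False # p"

lemma bl_tl: "(bl_code xs - Suc 0) div 2 = bl_code (tl xs)" by (cases xs) auto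

lemma lenc_0[simp]: "lenc 0 = 0" using lenc_lc[of "[]"] by simp
lemma lenc_cons[simp]: "lenc (cons a l) = Suc (lenc l)"
proof -
  obtain xs where "lc xs = l" using lc_surj by blast
  then show ?thesis using lenc_lc[of "a # xs"] lenc_lc[of xs] by simp
qed

lemma hN_bl: "hN (bl_code q) k = bl_code (drop k q)"
proof (induction k)
  case 0 then show ?case by simp
next
  case (Suc k)
  have "drop (Suc k) q = tl (drop k q)" by (simp add: drop_Suc tl_drop)
  then show ?case using Suc by (simp add: bl_tl)
qed

lemma drop_qc_lt: assumes "k < E" shows "drop k (qc E p) = True # drop (Suc k) (qc E p)"
proof -
  have "k < length (qc E p)" using assms by (simp add: qc_def)
  moreover have "qc E p ! k = True" using assms by (simp add: qc_def nth_append)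
  ultimately show ?thesis by (metis Cons_nth_drop_Suc)
qed

lemma drop_qc_E: "drop E (qc E p) = False # p" by (simp add: qc_def)

lemma eN_qc: "eN (bl_code (qc E p)) = E"
  unfolding eN_def
proof (rule Least_equality)
  show "hN (bl_code (qc E p)) E = 0 \<or> odd (hN (bl_code (qc E p)) E)"
    by (simp add: hN_bl drop_qc_E)
  fix k assume k: "hN (bl_code (qc E p)) k = 0 \<or> odd (hN (bl_code (qc E p)) k)"
  show "E \<le> k"
  proof (rule ccontr)
    assume "\<not> E \<le> k"
    then have "drop k (qc E p) = True # drop (Suc k) (qc E p)" by (intro drop_qc_lt) simp
    then show False using k by (simp add: hN_bl)
  qed
qed

lemma okN_qc: "okN (bl_code (qc E p))" by (simp add: okN_def eN_qc hN_bl drop_qc_E)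
lemma PN_qc: "PN (bl_code (qc E p)) = bl_code p" by (simp add: PN_def eN_qc hN_bl drop_qc_E)
lemma len_qc: "length (qc E p) = E + 1 + length p" by (simp add: qc_def)

lemma Wt_sound:
  assumes r: "\<forall>p t y. eval r [bl_code p, t] y \<longleftrightarrow> f p t = Some (\<rho> y)"
    and W: "Wt (bl_code (qc (enc r) p)) v"
  shows "\<exists>t'. f p t' = Some (\<rho> (res v))"
proof -
  let ?N = "bl_code (qc (enc r) p)"
  let ?k = "p2 v"
  let ?J = "p1 (nthc (p1 v) ?k)"
  have w: "valid (p1 v)" "?k < lenc (p1 v)" "p1 ?J = eN ?N" "lenc (p1 (p2 ?J)) = 2"
    "hdc (p1 (p2 ?J)) = PN ?N"
    using W unfolding Wt_def by blast+
  obtain L where L: "lc L = p1 v" using lc_surj by blast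
  have vl: "vl L" using w(1) L valid_lc by metis
  have k: "?k < length L" using w(2) L lenc_lc by metis
  have nth: "nthc (p1 v) ?k = L ! ?k" using k L nthc_lc by metis
  obtain as where as: "lc as = p1 (p2 ?J)" using lc_surj by blast
  have c: "p1 ?J = enc r" using w(3) eN_qc by simp
  have la: "length as = 2" using w(4) as lenc_lc by metis
  have ha: "hdc (lc as) = bl_code p" using w(5) as PN_qc by simp
  from la ha obtain b where asb: "as = [bl_code p, b]"
    by (cases as; cases "tl as") auto
  have J: "?J = pr (p1 ?J) (pr (p1 (p2 ?J)) (p2 (p2 ?J)))" by simp
  have "?J = pr (enc r) (pr (lc [bl_code p, b]) (res v))"
    using J c as asb unfolding res_def by metis
  then have "p1 (L ! ?k) = pr (enc r) (pr (lc [bl_code p, b]) (res v))" using nth by simp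
  then have "eval r [bl_code p, b] (res v)" by (rule sound[OF vl k])
  then show ?thesis using r by blast
qed

lemma Wt_complete:
  assumes r: "\<forall>p t y. eval r [bl_code p, t] y \<longleftrightarrow> f p t = Some (\<rho> y)"
    and ft: "f p t0 = Some (\<rho> y0)"
  shows "\<exists>v. Wt (bl_code (qc (enc r) p)) v \<and> res v = y0"
proof -
  have "eval r [bl_code p, t0] y0" using r ft by blast
  then obtain L where L: "vl L" "pr (enc r) (pr (lc [bl_code p, t0]) y0) \<in> p1 ` set L"
    using complete by blast
  then obtain x where x: "x \<in> set L" "p1 x = pr (enc r) (pr (lc [bl_code p, t0]) y0)" by (metis imageE)
  then obtain k where k: "k < length L" "L ! k = x" by (metis in_set_conv_nth)
  let ?v = "pr (lc L) k"
  have "Wt (bl_code (qc (enc r) p)) ?v"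
    unfolding Wt_def using L(1) k x by (simp add: valid_lc okN_qc eN_qc PN_qc)
  moreover have "res ?v = y0" unfolding res_def using k x by simp
  ultimately show ?thesis by blast
qed

definition fU :: "('d \<Rightarrow> 'd \<Rightarrow> bool) \<Rightarrow> (nat \<Rightarrow> 'd) \<Rightarrow> bool list \<Rightarrow> nat \<Rightarrow> 'd option" where
  "fU lt \<rho> p t = (if \<exists>v. Good lt \<rho> (bl_code p) t v
     then Some (\<rho> (res (LEAST v. Good lt \<rho> (bl_code p) t v))) else None)"

lemma fU_pc2:
  assumes rl: "\<forall>m n. eval rl [m, n] (if lt (\<rho> m) (\<rho> n) then 1 else 0)" and inj: "inj \<rho>"
  shows "pc2 \<rho> (fU lt \<rho>)"
proof -
  obtain rG where rG: "\<forall>z. eval rG [z] (if Good lt \<rho> (p1 (p2 z)) (p2 (p2 z)) (p1 z) then 1 else 0)"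
    using rp_Good[where rl=rl and lt=lt and \<rho>=\<rho>, OF rl] unfolding rp_def rc_def by blast
  obtain rr where rr: "\<forall>z. eval rr [z] (res z)" using rc_res[OF rc_id] unfolding rc_def by blast
  define H where "H = Comp r_sub [Comp Succ [Zero], Comp rG [Comp r_pr [Proj 0, Comp r_pr [Proj 1, Proj 2]]]]"
  have H: "eval H [v, N, t] (if Good lt \<rho> N t v then 0 else 1)" for v N t
  proof -
    have E: "eval rG [pr v (pr N t)] (if Good lt \<rho> N t v then 1 else 0)"
      using rG[rule_format, of "pr v (pr N t)"] by simp
    show ?thesis unfolding H_def by (rule evi eval_pr eval_sub E | simp)+
  qed
  have Mini_iff: "eval (Mini H) [N, t] v \<longleftrightarrow> Good lt \<rho> N t v \<and> (\<forall>v'<v. \<not> Good lt \<rho> N t v')" for N t v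
  proof
    assume "eval (Mini H) [N, t] v"
    then have a: "eval H (v # [N, t]) 0" and b: "\<forall>z<v. \<exists>w>0. eval H (z # [N, t]) w"
      by (auto elim: evM)
    have "Good lt \<rho> N t v"
    proof (rule ccontr)
      assume "\<not> Good lt \<rho> N t v"
      then have "eval H [v, N, t] 1" using H[of v N t] by simp
      then show False using a eval_det by fastforce
    qed
    moreover have "\<forall>v'<v. \<not> Good lt \<rho> N t v'"
    proof (intro allI impI notI)
      fix v' assume "v' < v" "Good lt \<rho> N t v'"
      then obtain w where w: "w > 0" "eval H [v', N, t] w" using b by blast
      have "eval H [v', N, t] 0" using H[of v' N t] \<open>Good lt \<rho> N t v'\<close> by simp
      then show False using w eval_det by fastforce
    qed
    ultimately show "Good lt \<rho> N t v \<and> (\<forall>v'<v. \<not> Good lt \<rho> N t v')" by blast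
  next
    assume g: "Good lt \<rho> N t v \<and> (\<forall>v'<v. \<not> Good lt \<rho> N t v')"
    show "eval (Mini H) [N, t] v"
      by (rule eval_Mini_tot[where H="\<lambda>v. if Good lt \<rho> N t v then 0 else 1", OF H]) (use g in auto)
  qed
  have least: "Good lt \<rho> N t v \<and> (\<forall>v'<v. \<not> Good lt \<rho> N t v') \<longleftrightarrow>
      (\<exists>v. Good lt \<rho> N t v) \<and> v = (LEAST v. Good lt \<rho> N t v)" for N t v
  proof
    assume g: "Good lt \<rho> N t v \<and> (\<forall>v'<v. \<not> Good lt \<rho> N t v')"
    then have "v = (LEAST v. Good lt \<rho> N t v)"
      by (intro Least_equality[symmetric]) (auto simp: not_less[symmetric])
    then show "(\<exists>v. Good lt \<rho> N t v) \<and> v = (LEAST v. Good lt \<rho> N t v)" using g by blast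
  next
    assume g: "(\<exists>v. Good lt \<rho> N t v) \<and> v = (LEAST v. Good lt \<rho> N t v)"
    then show "Good lt \<rho> N t v \<and> (\<forall>v'<v. \<not> Good lt \<rho> N t v')"
      using LeastI_ex[of "Good lt \<rho> N t"] not_less_Least[of _ "Good lt \<rho> N t"] by blast
  qed
  have main: "eval (Comp rr [Mini H]) [bl_code p, t] y \<longleftrightarrow> fU lt \<rho> p t = Some (\<rho> y)" for p t y
  proof
    assume "eval (Comp rr [Mini H]) [bl_code p, t] y"
    then obtain ys where ys: "list_all2 (\<lambda>g y. eval g [bl_code p, t] y) [Mini H] ys" "eval rr ys y"
      by (auto elim: evC)
    then obtain v where v: "ys = [v]" "eval (Mini H) [bl_code p, t] v"
      by (auto simp: list_all2_Cons1)
    have "y = res v" using ys(2) v(1) rr eval_det by blast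
    moreover have "(\<exists>v. Good lt \<rho> (bl_code p) t v) \<and> v = (LEAST v. Good lt \<rho> (bl_code p) t v)"
      using v(2) Mini_iff least by blast
    ultimately show "fU lt \<rho> p t = Some (\<rho> y)" unfolding fU_def by simp
  next
    assume f: "fU lt \<rho> p t = Some (\<rho> y)"
    then have ex: "\<exists>v. Good lt \<rho> (bl_code p) t v" unfolding fU_def by (auto split: if_splits)
    let ?v = "LEAST v. Good lt \<rho> (bl_code p) t v"
    have "\<rho> y = \<rho> (res ?v)" using f ex unfolding fU_def by simp
    then have y: "y = res ?v" using inj by (simp add: inj_eq)
    have "eval (Mini H) [bl_code p, t] ?v" using Mini_iff least ex by blast
    then show "eval (Comp rr [Mini H]) [bl_code p, t] y" using rr y by (blast intro: eval_Comp1)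
  qed
  show ?thesis unfolding pc2_def using main by blast
qed

lemma fU_mono: "mono_second lt (fU lt \<rho>)"
  unfolding mono_second_def
proof (intro allI impI)
  fix p t t' d d' assume tt: "t \<le> t'" and a: "fU lt \<rho> p t = Some d" and b: "fU lt \<rho> p t' = Some d'"
  let ?N = "bl_code p"
  from a have ea: "\<exists>v. Good lt \<rho> ?N t v" unfolding fU_def by (auto split: if_splits)
  from b have eb: "\<exists>v. Good lt \<rho> ?N t' v" unfolding fU_def by (auto split: if_splits)
  let ?va = "LEAST v. Good lt \<rho> ?N t v" and ?vb = "LEAST v. Good lt \<rho> ?N t' v"
  have ga: "Good lt \<rho> ?N t ?va" using LeastI_ex[OF ea] .
  have gb: "Good lt \<rho> ?N t' ?vb" using LeastI_ex[OF eb] .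
  have d: "d = \<rho> (res ?va)" using a ea unfolding fU_def by simp
  have d': "d' = \<rho> (res ?vb)" using b eb unfolding fU_def by simp
  have "?va < t'" "Wt ?N ?va" using ga tt unfolding Good_def by auto
  then have "res ?va = res ?vb \<or> lt (\<rho> (res ?va)) (\<rho> (res ?vb))" using gb unfolding Good_def by blast
  then show "d = d' \<or> lt d d'" using d d' by auto
qed

lemma max_exists:
  assumes irr: "\<forall>x. \<not> lt x x" and tr: "\<forall>x y z. lt x y \<longrightarrow> lt y z \<longrightarrow> lt x z"
    and fin: "finite S" and ne: "S \<noteq> {}" and ch: "\<forall>a\<in>S. \<forall>b\<in>S. a = b \<or> lt a b \<or> lt b a"
  shows "\<exists>m\<in>S. \<forall>e\<in>S. e = m \<or> lt e m"
  using fin ne ch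
proof (induction S rule: finite_ne_induct)
  case (singleton x) then show ?case by simp
next
  case (insert x F)
  then obtain m where m: "m \<in> F" "\<forall>e\<in>F. e = m \<or> lt e m" by blast
  have "x = m \<or> lt x m \<or> lt m x" using insert.prems m(1) by blast
  then show ?case
  proof (elim disjE)
    assume "x = m" then show ?thesis using m by blast
  next
    assume "lt x m" then show ?thesis using m by blast
  next
    assume xm: "lt m x"
    have "\<forall>e\<in>insert x F. e = x \<or> lt e x"
    proof
      fix e assume "e \<in> insert x F"
      then show "e = x \<or> lt e x"
      proof
        assume "e \<in> F"
        then have "e = m \<or> lt e m" using m by blast
        then show ?thesis using xm tr by blast
      qed simp
    qed
    then show ?thesis by blast
  qed
qed

lemma maxD_some:
  assumes irr: "\<forall>x. \<not> lt x x" and tr: "\<forall>x y z. lt x y \<longrightarrow> lt y z \<longrightarrow> lt x z"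
    and fin: "finite {d. \<exists>t. f p t = Some d}" and d: "d \<in> {d. \<exists>t. f p t = Some d}"
    and mx: "\<forall>e\<in>{d. \<exists>t. f p t = Some d}. e = d \<or> lt e d"
  shows "maxD lt f p = Some d"
proof -
  let ?S = "{d. \<exists>t. f p t = Some d}"
  have "(THE d. d \<in> ?S \<and> (\<forall>e\<in>?S. e = d \<or> lt e d)) = d"
  proof (rule the_equality)
    show "d \<in> ?S \<and> (\<forall>e\<in>?S. e = d \<or> lt e d)" using d mx by blast
    fix d' assume d': "d' \<in> ?S \<and> (\<forall>e\<in>?S. e = d' \<or> lt e d')"
    then have "d' = d \<or> lt d' d" "d = d' \<or> lt d d'" using mx d by blast+
    then show "d' = d" using irr tr by blast
  qed
  moreover have "?S \<noteq> {}" using d by blast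
  ultimately show ?thesis unfolding maxD_def Let_def using fin by simp
qed

lemma maxD_elim:
  assumes irr: "\<forall>x. \<not> lt x x" and tr: "\<forall>x y z. lt x y \<longrightarrow> lt y z \<longrightarrow> lt x z"
    and mono: "mono_second lt f" and F: "maxD lt f p = Some d"
  shows "finite {d. \<exists>t. f p t = Some d} \<and> d \<in> {d. \<exists>t. f p t = Some d} \<and>
         (\<forall>e\<in>{d. \<exists>t. f p t = Some d}. e = d \<or> lt e d)"
proof -
  let ?S = "{d. \<exists>t. f p t = Some d}"
  have fin: "finite ?S" and ne: "?S \<noteq> {}" and dT: "d = (THE d. d \<in> ?S \<and> (\<forall>e\<in>?S. e = d \<or> lt e d))"
    using F unfolding maxD_def Let_def by (auto split: if_splits)
  have ch: "\<forall>a\<in>?S. \<forall>b\<in>?S. a = b \<or> lt a b \<or> lt b a"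
  proof (intro ballI)
    fix a b assume "a \<in> ?S" "b \<in> ?S"
    then obtain t1 t2 where "f p t1 = Some a" "f p t2 = Some b" by blast
    then show "a = b \<or> lt a b \<or> lt b a" using mono unfolding mono_second_def
      by (cases "t1 \<le> t2") (metis, metis nat_le_linear)
  qed
  obtain m where m: "m \<in> ?S" "\<forall>e\<in>?S. e = m \<or> lt e m" using max_exists[OF irr tr fin ne ch] by blast
  have "(THE d. d \<in> ?S \<and> (\<forall>e\<in>?S. e = d \<or> lt e d)) = m"
  proof (rule the_equality)
    show "m \<in> ?S \<and> (\<forall>e\<in>?S. e = m \<or> lt e m)" using m by blast
    fix d' assume d': "d' \<in> ?S \<and> (\<forall>e\<in>?S. e = d' \<or> lt e d')"
    then have "d' = m \<or> lt d' m" "m = d' \<or> lt m d'" using m by blast+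
    then show "d' = m" using irr tr by blast
  qed
  then show ?thesis using fin m dT by simp
qed

lemma univ:
  assumes irr: "\<forall>x. \<not> lt x x" and tr: "\<forall>x y z. lt x y \<longrightarrow> lt y z \<longrightarrow> lt x z"
    and bij: "bij \<rho>"
    and r: "\<forall>p t y. eval r [bl_code p, t] y \<longleftrightarrow> f p t = Some (\<rho> y)"
    and mono: "mono_second lt f" and F: "maxD lt f p = Some d"
  shows "maxD lt (fU lt \<rho>) (qc (enc r) p) = Some d"
proof -
  let ?S = "{d. \<exists>t. f p t = Some d}"
  let ?q = "qc (enc r) p"
  let ?N = "bl_code ?q"
  let ?SU = "{d. \<exists>t. fU lt \<rho> ?q t = Some d}"
  have inj: "inj \<rho>" using bij by (rule bij_is_inj)
  have surj: "surj \<rho>" using bij by (rule bij_is_surj)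
  have S: "finite ?S" "d \<in> ?S" "\<forall>e\<in>?S. e = d \<or> lt e d" using maxD_elim[OF irr tr mono F] by blast+
  have WS: "\<rho> (res v) \<in> ?S" if "Wt ?N v" for v using Wt_sound[OF r that] by blast
  have sub: "?SU \<subseteq> ?S"
  proof
    fix d' assume "d' \<in> ?SU"
    then obtain t where t: "fU lt \<rho> ?q t = Some d'" by blast
    then have ex: "\<exists>v. Good lt \<rho> ?N t v" unfolding fU_def by (auto split: if_splits)
    let ?v = "LEAST v. Good lt \<rho> ?N t v"
    have "Good lt \<rho> ?N t ?v" using LeastI_ex[OF ex] .
    then have "Wt ?N ?v" unfolding Good_def by blast
    moreover have "d' = \<rho> (res ?v)" using t ex unfolding fU_def by simp
    ultimately show "d' \<in> ?S" using WS by simp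
  qed
  have dU: "d \<in> ?SU"
  proof -
    obtain t0 where t0: "f p t0 = Some d" using S(2) by blast
    obtain y0 where y0: "d = \<rho> y0" using surj by (metis surjD)
    obtain v0 where v0: "Wt ?N v0" "res v0 = y0" using Wt_complete[OF r, of p t0 y0] t0 y0 by blast
    let ?t = "Suc v0"
    have le: "res v' = res v0 \<or> lt (\<rho> (res v')) (\<rho> (res v0))" if "Wt ?N v'" for v'
    proof -
      have "\<rho> (res v') = d \<or> lt (\<rho> (res v')) d" using S(3) WS[OF that] by blast
      then show ?thesis using inj y0 v0(2) by (auto simp: inj_eq)
    qed
    have g0: "Good lt \<rho> ?N ?t v0" unfolding Good_def using v0(1) le by auto
    then have ex: "\<exists>v. Good lt \<rho> ?N ?t v" by blast
    let ?v = "LEAST v. Good lt \<rho> ?N ?t v"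
    have gv: "Good lt \<rho> ?N ?t ?v" using LeastI_ex[OF ex] .
    then have "Wt ?N ?v" "res v0 = res ?v \<or> lt (\<rho> (res v0)) (\<rho> (res ?v))"
      using v0(1) unfolding Good_def by auto
    then have A: "d = \<rho> (res ?v) \<or> lt d (\<rho> (res ?v))" and B: "\<rho> (res ?v) = d \<or> lt (\<rho> (res ?v)) d"
      using y0 v0(2) S(3) WS by auto
    have "\<rho> (res ?v) = d" using A B irr tr by blast
    then have "fU lt \<rho> ?q ?t = Some d" using ex unfolding fU_def by simp
    then show ?thesis by blast
  qed
  show ?thesis
  proof (rule maxD_some[OF irr tr])
    show "finite ?SU" using S(1) sub by (rule finite_subset[rotated])
    show "d \<in> ?SU" by (rule dU)
    show "\<forall>e\<in>?SU. e = d \<or> lt e d" using sub S(3) by blast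
  qed
qed

theorem mainTheorem5:
  fixes lt :: "'d \<Rightarrow> 'd \<Rightarrow> bool" and \<rho> :: "nat \<Rightarrow> 'd"
  assumes "computable_poset lt \<rho>"
  shows "\<exists>U \<in> MaxPR lt \<rho>. \<forall>F \<in> MaxPR lt \<rho>. \<exists>c::nat. \<forall>d \<in> ran F.
           \<exists>ku kf. Kc U d = Some ku \<and> Kc F d = Some kf \<and> ku \<le> kf + c"
proof -
  have bij: "bij \<rho>" and irr: "\<forall>x. \<not> lt x x" and tr: "\<forall>x y z. lt x y \<longrightarrow> lt y z \<longrightarrow> lt x z"
    using assms unfolding computable_poset_def by blast+
  obtain rl where rl: "\<forall>m n. eval rl [m, n] (if lt (\<rho> m) (\<rho> n) then 1 else 0)"
    using assms unfolding computable_poset_def by blast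
  let ?U = "maxD lt (fU lt \<rho>)"
  have U: "?U \<in> MaxPR lt \<rho>"
    unfolding MaxPR_def using fU_pc2[OF rl bij_is_inj[OF bij]] fU_mono by blast
  show ?thesis
  proof (rule bexI[OF _ U], intro ballI)
    fix F assume "F \<in> MaxPR lt \<rho>"
    then obtain f where F: "F = maxD lt f" "pc2 \<rho> f" "mono_second lt f" unfolding MaxPR_def by blast
    obtain r where r: "\<forall>p t y. eval r [bl_code p, t] y \<longleftrightarrow> f p t = Some (\<rho> y)"
      using F(2) unfolding pc2_def by blast
    show "\<exists>c::nat. \<forall>d\<in>ran F. \<exists>ku kf. Kc ?U d = Some ku \<and> Kc F d = Some kf \<and> ku \<le> kf + c"
    proof (rule exI[of _ "enc r + 1"], intro ballI)
      fix d assume "d \<in> ran F"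
      then have ex: "\<exists>p. F p = Some d" by (auto simp: ran_def)
      let ?kf = "LEAST n. \<exists>p. F p = Some d \<and> length p = n"
      have "\<exists>p. F p = Some d \<and> length p = ?kf" by (rule LeastI_ex) (use ex in blast)
      then obtain p where p: "F p = Some d" "length p = ?kf" by blast
      have KF: "Kc F d = Some ?kf" unfolding Kc_def using ex by simp
      have Uq: "?U (qc (enc r) p) = Some d"
        using univ[OF irr tr bij r F(3)] p(1) F(1) by simp
      then have exU: "\<exists>q. ?U q = Some d" by blast
      let ?ku = "LEAST n. \<exists>q. ?U q = Some d \<and> length q = n"
      have "?ku \<le> length (qc (enc r) p)" by (rule Least_le) (use Uq in blast)
      then have "?ku \<le> ?kf + (enc r + 1)" using p(2) len_qc by simp
      moreover have "Kc ?U d = Some ?ku" unfolding Kc_def using exU by simp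
      ultimately show "\<exists>ku kf. Kc ?U d = Some ku \<and> Kc F d = Some kf \<and> ku \<le> kf + (enc r + 1)"
        using KF by blast
    qed
  qed
qed

end
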